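(* Let $M,N\ge1$, $\mathbf y\in\mathbb{R}^M$, $\mathbf H\in\mathbb{R}^{M\times N}$ with $R=\operatorname{rank}(\mathbf H)\ge1$, and $\sigma_e^2>0$, $\sigma_\epsilon^2>0$. Let $\mathbf H=\mathbf U\boldsymbol\Sigma\mathbf V^{\mathrm T}$ be a singular value decomposition ($\mathbf U,\mathbf V$ orthogonal) with nonzero singular values $\lambda_1\ge\cdots\ge\lambda_R>0$ in the first $R$ diagonal positions of $\boldsymbol\Sigma$, let $\boldsymbol\lambda=(\lambda_1,\dots,\lambda_R)^{\mathrm T}$ and $\widetilde{\mathbf y}=\mathbf U^{\mathrm T}\mathbf y$. Let $$f(\mathbf x)=\frac{\|\mathbf y-\mathbf H\mathbf x\|_2^2}{2(\sigma_e^2\|\mathbf x\|_2^2+\sigma_\epsilon^2)}+\frac M2\log(\sigma_e^2\|\mathbf x\|_2^2+\sigma_\epsilon^2),$$ and for $\nu>-\lambda_R^2/(2\sigma_e^2)$ let $$g(\nu)=\sum_{j=1}^{R}\frac{\widetilde y_j^2\,\nu\sigma_e^2}{\lambda_j^2+2\nu\sigma_e^2}+\frac12\|\widetilde{\mathbf y}_{R+1:M}\|_2^2-\frac M2\left(\sum_{j=1}^{R}\frac{\sigma_e^2\widetilde y_j^2\lambda_j^2}{(\lambda_j^2+2\nu\sigma_e^2)^2}+\sigma_\epsilon^2\right)+\nu\sigma_\epsilon^2 .$$ Then the following hold. (A) If $R\le N-1$ and $g(0)\ge0$, then every $\mathbf x=\mathbf V\widetilde{\mathbf x}$ with $\widetilde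 x_j=\widetilde y_j/\lambda_j$ for $j=1,\dots,R$ and $\sum_{i=R+1}^N\widetilde x_i^2=\frac{2g(0)}{M\sigma_e^2}$ is a global minimizer of $f$ on $\mathbb{R}^N$. (B) If $R\le N-1$ and $g(0)<0$, then there exists $\nu^\star\in(0,M/2]$ with $g(\nu^\star)=0$, and for any such $\nu^\star$ the vector $\mathbf x=\mathbf V\widetilde{\mathbf x}$ with $\widetilde x_j=\frac{\widetilde y_j\lambda_j}{\lambda_j^2+2\nu^\star\sigma_e^2}$ for $j=1,\dots,R$ and $\widetilde x_i=0$ for $i=R+1,\dots,N$ is a global minimizer of $f$. (C) If $R=N$, then for any $\nu^\star\in\left(-\frac{\lambda_R^2}{2\sigma_e^2},\frac M2\right]$ with $g(\nu^\star)=0$, the vector $\mathbf x=(\mathbf H^{\mathrm T}\mathbf H+2\nu^\star\sigma_e^2\mathbf I_N)^{-1}\mathbf H^{\mathrm T}\mathbf y$ is a global minimizer of $f$.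
   Context: $\widetilde{\mathbf y}_{R+1:M}=(\widetilde y_{R+1},\dots,\widetilde y_M)^{\mathrm T}$; if $R=M$ it is empty and its squared norm is $0$. The function $f$ is, up to additive constants, the negative log-likelihood of $\mathbf x$ in the model $\mathbf y=(\mathbf H+\mathbf E)\mathbf x+\boldsymbol\epsilon$ with $\mathbf E$ having i.i.d. $\mathcal N(0,\sigma_e^2)$ entries and $\boldsymbol\epsilon\sim\mathcal N(\mathbf 0,\sigma_\epsilon^2\mathbf I_M)$ independent; its global minimizers are the maximum likelihood estimates of $\mathbf x$. *)

theory Defs
  imports "Jordan_Normal_Form.DL_Rank" "Jordan_Normal_Form.Gauss_Jordan_Elimination"
begin

text \<open>Vectors/matrices are Jordan_Normal_Form vectors/matrices; indices are 0-based,
  so the paper's index j = 1..R corresponds to j = 0..R-1 here.\<close>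

definition sqn :: "real vec \<Rightarrow> real" where
  "sqn v = v \<bullet> v"

definition fobj :: "real vec \<Rightarrow> real mat \<Rightarrow> real \<Rightarrow> real \<Rightarrow> real vec \<Rightarrow> real" where
  "fobj y H se2 sn2 x =
     sqn (y - H *\<^sub>v x) / (2 * (se2 * sqn x + sn2))
     + real (dim_vec y) / 2 * ln (se2 * sqn x + sn2)"

text \<open>Secular function g; yt = U^T y, lam j = lambda_(j+1), R = rank.\<close>
definition gfun :: "nat \<Rightarrow> nat \<Rightarrow> (nat \<Rightarrow> real) \<Rightarrow> real vec \<Rightarrow> real \<Rightarrow> real \<Rightarrow> real \<Rightarrow> real" where
  "gfun M R lam yt se2 sn2 \<nu> =
     (\<Sum>j<R. (yt $ j)\<^sup>2 * \<nu> * se2 / ((lam j)\<^sup>2 + 2 * \<nu> * se2))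
     + 1/2 * (\<Sum>j\<in>{R..<M}. (yt $ j)\<^sup>2)
     - real M / 2 * ((\<Sum>j<R. se2 * (yt $ j)\<^sup>2 * (lam j)\<^sup>2 / ((lam j)\<^sup>2 + 2 * \<nu> * se2)\<^sup>2) + sn2)
     + \<nu> * sn2"

definition is_global_min :: "nat \<Rightarrow> (real vec \<Rightarrow> real) \<Rightarrow> real vec \<Rightarrow> bool" where
  "is_global_min N f x \<longleftrightarrow> x \<in> carrier_vec N \<and> (\<forall>z \<in> carrier_vec N. f x \<le> f z)"

end

theory Submission
  imports Defs
begin

lemma core_ineq:
  fixes A B As Bs M \<nu> :: real
  assumes B: "B > 0" and Bs: "Bs > 0" and M: "M \<ge> 0"
    and As: "As = (M - 2*\<nu>) * Bs" and le: "As + 2*\<nu>*Bs \<le> A + 2*\<nu>*B"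
  shows "As/(2*Bs) + M/2 * ln Bs \<le> A/(2*B) + M/2 * ln B"
proof -
  have e1: "As/(2*Bs) = (M - 2*\<nu>)/2" using As Bs by (simp add: field_simps)
  have "A \<ge> M*Bs - 2*\<nu>*B" using As le by (simp add: algebra_simps)
  then have e2: "A/(2*B) \<ge> (M*Bs - 2*\<nu>*B)/(2*B)" using B by (simp add: divide_right_mono)
  have e3: "(M*Bs - 2*\<nu>*B)/(2*B) = M*Bs/(2*B) - \<nu>" using B by (simp add: field_simps)
  have "ln (Bs/B) \<le> Bs/B - 1" using B Bs by (intro ln_le_minus_one) simp
  then have "ln Bs - ln B \<le> Bs/B - 1" using B Bs by (simp add: ln_div)
  then have "M/2 * (ln Bs - ln B) \<le> M/2 * (Bs/B - 1)" using M by (intro mult_left_mono) auto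
  then have e4: "M/2 * ln Bs \<le> M/2 * ln B + M*Bs/(2*B) - M/2" using B by (simp add: field_simps)
  have "As/(2*Bs) + M/2 * ln Bs \<le> (M - 2*\<nu>)/2 + (M/2 * ln B + M*Bs/(2*B) - M/2)"
    using e1 e4 by linarith
  also have "\<dots> = (M*Bs/(2*B) - \<nu>) + M/2 * ln B" by (simp add: field_simps)
  also have "\<dots> \<le> A/(2*B) + M/2 * ln B" using e2 e3 by linarith
  finally show ?thesis .
qed

lemma rank_le_nr:
  assumes A: "A \<in> carrier_mat n nc"
  shows "vec_space.rank n A \<le> n"
proof -
  interpret vs: vec_space "TYPE('a::field)" n .
  have "subspace class_ring (vs.span (set (cols A))) vs.V"
    by (metis A cols_dim carrier_matD(1) vs.span_is_subspace)
  then have "vectorspace.dim class_ring (vs.vs (vs.span (set (cols A)))) \<le> vs.dim"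
    using vs.subspace_dim vs.fin_dim vs.fin_dim_span_cols[OF A] by blast
  then show ?thesis unfolding vs.rank_def vs.dim_is_n .
qed

lemma orth_other:
  assumes Q: "(Q::real mat) \<in> carrier_mat n n" and o: "transpose_mat Q * Q = 1\<^sub>m n"
  shows "Q * transpose_mat Q = 1\<^sub>m n"
  by (rule mat_mult_left_right_inverse[of "transpose_mat Q" n Q]) (use Q o in auto)

lemma sqn_orth:
  assumes Q: "Q \<in> carrier_mat m n" and o: "transpose_mat Q * Q = 1\<^sub>m n" and w: "w \<in> carrier_vec n"
  shows "sqn (Q *\<^sub>v w) = sqn w"
proof -
  have "sqn (Q *\<^sub>v w) = (transpose_mat Q *\<^sub>v (Q *\<^sub>v w)) \<bullet> w"
    unfolding sqn_def by (rule transpose_vec_mult_scalar[OF Q w, symmetric]) (use Q w in simp)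
  also have "transpose_mat Q *\<^sub>v (Q *\<^sub>v w) = (transpose_mat Q * Q) *\<^sub>v w"
    using Q w by (intro assoc_mult_mat_vec[symmetric]) auto
  also have "\<dots> = w" using o w by simp
  finally show ?thesis unfolding sqn_def .
qed

lemma sqn_sum: "v \<in> carrier_vec n \<Longrightarrow> sqn v = (\<Sum>i<n. (v$i)\<^sup>2)"
  unfolding sqn_def scalar_prod_def by (simp add: power2_eq_square atLeast0LessThan)

lemma sum_split: "(R::nat) \<le> M \<Longrightarrow> (\<Sum>i<M. f i) = (\<Sum>i<R. f i) + (\<Sum>i\<in>{R..<M}. f i)"
proof -
  assume "R \<le> M"
  then have "{..<M} = {..<R} \<union> {R..<M}" by auto
  then show ?thesis by (simp add: sum.union_disjoint[symmetric] ivl_disj_int)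
qed

lemma quad_pt:
  fixes a l c x w :: real
  assumes d: "l\<^sup>2 + c > 0" and x: "x = a * l / (l\<^sup>2 + c)"
  shows "(a - l*x)\<^sup>2 + c * x\<^sup>2 \<le> (a - l*w)\<^sup>2 + c * w\<^sup>2"
proof -
  have "(a - l*w)\<^sup>2 + c * w\<^sup>2 - ((a - l*x)\<^sup>2 + c * x\<^sup>2) = (l\<^sup>2 + c) * (w - x)\<^sup>2"
  proof -
    have "x * (l\<^sup>2 + c) = a * l" using x d by simp
    then show ?thesis by (simp add: power2_eq_square algebra_simps) (smt (verit) \<open>x * (l\<^sup>2 + c) = a * l\<close> power2_eq_square distrib_left mult.commute mult.left_commute)
  qed
  moreover have "(l\<^sup>2 + c) * (w - x)\<^sup>2 \<ge> 0" using d by simp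
  ultimately show ?thesis by linarith
qed

lemma t1_pt:
  fixes a l c x d :: real
  assumes d: "d = l\<^sup>2 + c" and dp: "d > 0" and x: "x = a * l / d"
  shows "(a - l*x)\<^sup>2 + c * x\<^sup>2 = a\<^sup>2 * c / d"
proof -
  have xd: "x * d = a * l" using x dp by simp
  have e: "a - l*x = a * c / d" unfolding x using dp d by (simp add: field_simps power2_eq_square)
  have "(a - l*x)\<^sup>2 + c * x\<^sup>2 = a\<^sup>2 - 2*a*l*x + (x*d)*x" unfolding d by (simp add: power2_eq_square algebra_simps)
  also have "\<dots> = a * (a - l*x)" unfolding xd by (simp add: power2_eq_square algebra_simps)
  also have "\<dots> = a * (a * c / d)" unfolding e ..
  finally show ?thesis by (simp add: power2_eq_square)
qed

lemma gend_pt: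
  fixes p l c d :: real
  assumes d: "d = l\<^sup>2 + c" and dp: "d > 0"
  shows "p / d - p * l\<^sup>2 / d\<^sup>2 = p * c / d\<^sup>2"
proof -
  have "p / d = p * d / d\<^sup>2" using dp by (simp add: power2_eq_square)
  then have "p / d - p * l\<^sup>2 / d\<^sup>2 = (p * d - p * l\<^sup>2) / d\<^sup>2" by (simp add: diff_divide_distrib)
  also have "p * d - p * l\<^sup>2 = p * c" unfolding d by (simp add: algebra_simps)
  finally show ?thesis .
qed

lemma smult_one_mult: "(x :: real vec) \<in> carrier_vec n \<Longrightarrow> (c \<cdot>\<^sub>m 1\<^sub>m n) *\<^sub>v x = c \<cdot>\<^sub>v x"
  by (intro eq_vecI) (auto simp: row_smult)

lemma mult_zero_vec: "(A :: real mat) \<in> carrier_mat n m \<Longrightarrow> A *\<^sub>v 0\<^sub>v m = 0\<^sub>v n"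
  by (intro eq_vecI) (simp_all add: mult_mat_vec_def scalar_prod_def)

locale svdctx =
  fixes M N R :: nat and y :: "real vec" and H U V S :: "real mat"
    and lam :: "nat \<Rightarrow> real" and se2 sn2 :: real
  assumes y: "y \<in> carrier_vec M"
    and H: "H \<in> carrier_mat M N"
    and RM: "R \<le> M" and RN: "R \<le> N"
    and se2: "se2 > 0" and sn2: "sn2 > 0"
    and U: "U \<in> carrier_mat M M" and Uorth: "transpose_mat U * U = 1\<^sub>m M"
    and V: "V \<in> carrier_mat N N" and Vorth: "transpose_mat V * V = 1\<^sub>m N"
    and S: "S \<in> carrier_mat M N"
    and Sdiag: "\<forall>i<M. \<forall>j<N. S $$ (i,j) = (if i = j \<and> i < R then lam i else 0)"
    and svd: "H = U * S * transpose_mat V"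
    and lam_pos: "\<forall>j<R. lam j > 0"
begin

abbreviation "yt \<equiv> transpose_mat U *\<^sub>v y"

definition Phi :: "real vec \<Rightarrow> real" where
  "Phi w = (\<Sum>j<R. (yt$j - lam j * w$j)\<^sup>2) + (\<Sum>j\<in>{R..<M}. (yt$j)\<^sup>2)"

definition Bf :: "real vec \<Rightarrow> real" where "Bf w = se2 * sqn w + sn2"

definition Fsc :: "real vec \<Rightarrow> real" where
  "Fsc w = Phi w / (2 * Bf w) + real M / 2 * ln (Bf w)"

lemma yt_carrier: "yt \<in> carrier_vec M" using U y by simp

lemma UUt: "U * transpose_mat U = 1\<^sub>m M" by (rule orth_other[OF U Uorth])
lemma VVt: "V * transpose_mat V = 1\<^sub>m N" by (rule orth_other[OF V Vorth])

lemma U_yt: "U *\<^sub>v yt = y"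
proof -
  have "U *\<^sub>v yt = (U * transpose_mat U) *\<^sub>v y" using U y by (intro assoc_mult_mat_vec[symmetric]) auto
  also have "\<dots> = y" using UUt y by simp
  finally show ?thesis .
qed

lemma V_Vt: "z \<in> carrier_vec N \<Longrightarrow> V *\<^sub>v (transpose_mat V *\<^sub>v z) = z"
proof -
  assume z: "z \<in> carrier_vec N"
  have "V *\<^sub>v (transpose_mat V *\<^sub>v z) = (V * transpose_mat V) *\<^sub>v z" using V z by (intro assoc_mult_mat_vec[symmetric]) auto
  also have "\<dots> = z" using VVt z by simp
  finally show ?thesis .
qed

lemma Vt_V: "z \<in> carrier_vec N \<Longrightarrow> transpose_mat V *\<^sub>v (V *\<^sub>v z) = z"
proof -
  assume z: "z \<in> carrier_vec N"
  have "transpose_mat V *\<^sub>v (V *\<^sub>v z) = (transpose_mat V * V) *\<^sub>v z" using V z by (intro assoc_mult_mat_vec[symmetric]) auto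
  also have "\<dots> = z" using Vorth z by simp
  finally show ?thesis .
qed

lemma S_mult: assumes w: "w \<in> carrier_vec N"
  shows "S *\<^sub>v w = vec M (\<lambda>i. if i < R then lam i * w$i else 0)"
proof (rule eq_vecI)
  show "dim_vec (S *\<^sub>v w) = dim_vec (vec M (\<lambda>i. if i < R then lam i * w $ i else 0))" using S by simp
  fix i assume "i < dim_vec (vec M (\<lambda>i. if i < R then lam i * w $ i else 0))"
  then have i: "i < M" by simp
  have "(S *\<^sub>v w) $ i = (\<Sum>j\<in>{0..<N}. S $$ (i,j) * w $ j)"
    using S w i by (simp add: mult_mat_vec_def scalar_prod_def)
  also have "\<dots> = (\<Sum>j\<in>{0..<N}. (if j = i then (if i < R then lam i * w$i else 0) else 0))"
    using Sdiag i by (intro sum.cong) auto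
  also have "\<dots> = (if i < R then lam i * w$i else 0)" using i RN by (simp add: sum.delta')
  finally show "(S *\<^sub>v w) $ i = vec M (\<lambda>i. if i < R then lam i * w $ i else 0) $ i" using i by simp
qed

lemma ST_mult: assumes v: "v \<in> carrier_vec M"
  shows "transpose_mat S *\<^sub>v v = vec N (\<lambda>i. if i < R then lam i * v$i else 0)"
proof (rule eq_vecI)
  show "dim_vec (transpose_mat S *\<^sub>v v) = dim_vec (vec N (\<lambda>i. if i < R then lam i * v $ i else 0))" using S by simp
  fix i assume "i < dim_vec (vec N (\<lambda>i. if i < R then lam i * v $ i else 0))"
  then have i: "i < N" by simp
  have "(transpose_mat S *\<^sub>v v) $ i = (\<Sum>j\<in>{0..<M}. S $$ (j,i) * v $ j)"
    using S v i by (simp add: mult_mat_vec_def scalar_prod_def)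
  also have "\<dots> = (\<Sum>j\<in>{0..<M}. (if j = i then (if i < R then lam i * v$i else 0) else 0))"
    using Sdiag i by (intro sum.cong) auto
  also have "\<dots> = (if i < R then lam i * v$i else 0)" using i RM by (simp add: sum.delta')
  finally show "(transpose_mat S *\<^sub>v v) $ i = vec N (\<lambda>i. if i < R then lam i * v $ i else 0) $ i" using i by simp
qed

lemma resid: assumes w: "w \<in> carrier_vec N"
  shows "sqn (y - H *\<^sub>v (V *\<^sub>v w)) = Phi w"
proof -
  have "H *\<^sub>v (V *\<^sub>v w) = U *\<^sub>v (S *\<^sub>v (transpose_mat V *\<^sub>v (V *\<^sub>v w)))"
    unfolding svd using U S V w by (simp add: assoc_mult_mat_vec[of _ M M _ N] assoc_mult_mat_vec[of _ M N _ N])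
  also have "\<dots> = U *\<^sub>v (S *\<^sub>v w)" using Vt_V[OF w] by simp
  finally have "y - H *\<^sub>v (V *\<^sub>v w) = U *\<^sub>v yt - U *\<^sub>v (S *\<^sub>v w)" using U_yt by simp
  also have "\<dots> = U *\<^sub>v (yt - S *\<^sub>v w)" using U S w yt_carrier
    by (intro mult_minus_distrib_mat_vec[symmetric]) auto
  finally have "sqn (y - H *\<^sub>v (V *\<^sub>v w)) = sqn (yt - S *\<^sub>v w)"
    using sqn_orth[OF U Uorth] S w yt_carrier by simp
  also have "\<dots> = (\<Sum>i<M. ((yt - S *\<^sub>v w)$i)\<^sup>2)" using S w yt_carrier by (intro sqn_sum) auto
  also have "\<dots> = (\<Sum>i<M. (yt$i - (if i < R then lam i * w$i else 0))\<^sup>2)"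
    using S_mult[OF w] yt_carrier by (intro sum.cong) auto
  also have "\<dots> = Phi w" unfolding Phi_def sum_split[OF RM] by simp
  finally show ?thesis .
qed

lemma fobj_rot: assumes w: "w \<in> carrier_vec N"
  shows "fobj y H se2 sn2 (V *\<^sub>v w) = Fsc w"
  unfolding fobj_def Fsc_def Bf_def resid[OF w] sqn_orth[OF V Vorth w] using y by simp

lemma global_min_rot:
  assumes xt: "xt \<in> carrier_vec N" and le: "\<And>w. w \<in> carrier_vec N \<Longrightarrow> Fsc xt \<le> Fsc w"
  shows "is_global_min N (fobj y H se2 sn2) (V *\<^sub>v xt)"
  unfolding is_global_min_def
proof (intro conjI ballI)
  show "V *\<^sub>v xt \<in> carrier_vec N" using V xt by simp
  fix z :: "real vec" assume z: "z \<in> carrier_vec N"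
  have w: "transpose_mat V *\<^sub>v z \<in> carrier_vec N" using V z by simp
  have "fobj y H se2 sn2 (V *\<^sub>v xt) = Fsc xt" by (rule fobj_rot[OF xt])
  also have "\<dots> \<le> Fsc (transpose_mat V *\<^sub>v z)" by (rule le[OF w])
  also have "\<dots> = fobj y H se2 sn2 z" using fobj_rot[OF w] V_Vt[OF z] by simp
  finally show "fobj y H se2 sn2 (V *\<^sub>v xt) \<le> fobj y H se2 sn2 z" .
qed

lemma opt_general:
  fixes \<nu> :: real
  assumes xt: "xt \<in> carrier_vec N"
    and d: "\<forall>j<R. (lam j)\<^sup>2 + 2*\<nu>*se2 > 0"
    and xj: "\<forall>j<R. xt$j = yt$j * lam j / ((lam j)\<^sup>2 + 2*\<nu>*se2)"
    and rest: "\<forall>j\<in>{R..<N}. \<forall>a. \<nu>*(xt$j)\<^sup>2 \<le> \<nu>*a\<^sup>2"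
    and rel: "Phi xt = (real M - 2*\<nu>) * Bf xt"
  shows "is_global_min N (fobj y H se2 sn2) (V *\<^sub>v xt)"
proof (rule global_min_rot[OF xt])
  fix w :: "real vec" assume w: "w \<in> carrier_vec N"
  let ?c = "2*\<nu>*se2"
  have key: "Phi xt + ?c * sqn xt \<le> Phi w + ?c * sqn w"
  proof -
    have exp: "Phi v + ?c * sqn v = (\<Sum>j<R. (yt$j - lam j * v$j)\<^sup>2 + ?c * (v$j)\<^sup>2)
        + (\<Sum>j\<in>{R..<M}. (yt$j)\<^sup>2) + 2*se2 * (\<Sum>j\<in>{R..<N}. \<nu> * (v$j)\<^sup>2)"
      if v: "v \<in> carrier_vec N" for v
      unfolding Phi_def sqn_sum[OF v] sum_split[OF RN]
      by (simp add: sum.distrib sum_distrib_left algebra_simps)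
    have s1: "(\<Sum>j<R. (yt$j - lam j * xt$j)\<^sup>2 + ?c * (xt$j)\<^sup>2) \<le> (\<Sum>j<R. (yt$j - lam j * w$j)\<^sup>2 + ?c * (w$j)\<^sup>2)"
      by (intro sum_mono quad_pt) (use d xj in auto)
    have s2: "(\<Sum>j\<in>{R..<N}. \<nu> * (xt$j)\<^sup>2) \<le> (\<Sum>j\<in>{R..<N}. \<nu> * (w$j)\<^sup>2)"
      by (intro sum_mono) (use rest in auto)
    show ?thesis unfolding exp[OF xt] exp[OF w] using s1 s2 se2 by (smt (verit) mult_left_mono)
  qed
  have pos: "Bf v > 0" for v
  proof -
    have "sqn v \<ge> 0" unfolding sqn_def by (simp add: scalar_prod_def sum_nonneg)
    then show ?thesis unfolding Bf_def using se2 sn2 by (simp add: add_nonneg_pos)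
  qed
  show "Fsc xt \<le> Fsc w" unfolding Fsc_def
  proof (rule core_ineq[OF pos pos _ rel])
    show "0 \<le> real M" by simp
    show "Phi xt + 2 * \<nu> * Bf xt \<le> Phi w + 2 * \<nu> * Bf w"
      using key unfolding Bf_def by (simp add: algebra_simps)
  qed
qed

lemma g_ident:
  fixes \<nu> :: real
  assumes xt: "xt \<in> carrier_vec N"
    and d: "\<forall>j<R. (lam j)\<^sup>2 + 2*\<nu>*se2 > 0"
    and xj: "\<forall>j<R. xt$j = yt$j * lam j / ((lam j)\<^sup>2 + 2*\<nu>*se2)"
    and zero: "\<forall>j\<in>{R..<N}. xt$j = 0"
  shows "Phi xt - (real M - 2*\<nu>) * Bf xt = 2 * gfun M R lam yt se2 sn2 \<nu>"
proof -
  let ?d = "\<lambda>j. (lam j)\<^sup>2 + 2*\<nu>*se2"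
  have sq: "sqn xt = (\<Sum>j<R. (xt$j)\<^sup>2)"
    unfolding sqn_sum[OF xt] sum_split[OF RN] using zero by simp
  have t1: "(yt$j - lam j * xt$j)\<^sup>2 + 2*\<nu>*se2 * (xt$j)\<^sup>2 = 2 * ((yt $ j)\<^sup>2 * \<nu> * se2 / ?d j)"
    if j: "j < R" for j
  proof -
    have dj: "?d j > 0" using d j by auto
    have "(yt$j - lam j * xt$j)\<^sup>2 + 2*\<nu>*se2 * (xt$j)\<^sup>2 = (yt $ j)\<^sup>2 * (2*\<nu>*se2) / ?d j"
      by (rule t1_pt[OF refl dj]) (use xj j in simp)
    then show ?thesis by simp
  qed
  have t2: "se2 * (xt$j)\<^sup>2 = se2 * (yt $ j)\<^sup>2 * (lam j)\<^sup>2 / (?d j)\<^sup>2" if j: "j < R" for j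
    unfolding xj[rule_format, OF j] by (simp add: power_divide power_mult_distrib)
  have "Phi xt - (real M - 2*\<nu>) * Bf xt
      = (\<Sum>j<R. (yt$j - lam j * xt$j)\<^sup>2 + 2*\<nu>*se2 * (xt$j)\<^sup>2) + (\<Sum>j\<in>{R..<M}. (yt$j)\<^sup>2)
        - real M * ((\<Sum>j<R. se2 * (xt$j)\<^sup>2) + sn2) + 2*\<nu>*sn2"
  proof -
    have a: "(\<Sum>j<R. (yt$j - lam j * xt$j)\<^sup>2 + 2*\<nu>*se2 * (xt$j)\<^sup>2)
       = (\<Sum>j<R. (yt$j - lam j * xt$j)\<^sup>2) + 2*\<nu>*se2 * (\<Sum>j<R. (xt$j)\<^sup>2)"
      by (simp add: sum.distrib sum_distrib_left)
    have b: "(\<Sum>j<R. se2 * (xt$j)\<^sup>2) = se2 * (\<Sum>j<R. (xt$j)\<^sup>2)" by (simp add: sum_distrib_left)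
    show ?thesis unfolding Phi_def Bf_def sq a b by (simp add: algebra_simps)
  qed
  also have "\<dots> = (\<Sum>j<R. 2 * ((yt $ j)\<^sup>2 * \<nu> * se2 / ?d j)) + (\<Sum>j\<in>{R..<M}. (yt$j)\<^sup>2)
        - real M * ((\<Sum>j<R. se2 * (yt $ j)\<^sup>2 * (lam j)\<^sup>2 / (?d j)\<^sup>2) + sn2) + 2*\<nu>*sn2"
    using t1 t2 by simp
  also have "(\<Sum>j<R. 2 * ((yt $ j)\<^sup>2 * \<nu> * se2 / ?d j)) = 2 * (\<Sum>j<R. (yt $ j)\<^sup>2 * \<nu> * se2 / ?d j)"
    by (simp add: sum_distrib_left)
  also have "2 * (\<Sum>j<R. (yt $ j)\<^sup>2 * \<nu> * se2 / ?d j) + (\<Sum>j\<in>{R..<M}. (yt$j)\<^sup>2)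
        - real M * ((\<Sum>j<R. se2 * (yt $ j)\<^sup>2 * (lam j)\<^sup>2 / (?d j)\<^sup>2) + sn2) + 2*\<nu>*sn2
        = 2 * gfun M R lam yt se2 sn2 \<nu>"
    unfolding gfun_def by (simp add: algebra_simps)
  finally show ?thesis .
qed

lemma caseA_rel:
  assumes xt: "xt \<in> carrier_vec N" and M1: "M \<ge> 1"
    and lp: "\<forall>j<R. lam j > 0"
    and xj: "\<forall>j<R. xt$j = yt$j / lam j"
    and rs: "(\<Sum>i\<in>{R..<N}. (xt $ i)\<^sup>2) = 2 * gfun M R lam yt se2 sn2 0 / (real M * se2)"
  shows "Phi xt = (real M - 2*0) * Bf xt"
proof -
  have "(\<Sum>j<R. (yt$j - lam j * xt$j)\<^sup>2) = 0"
  proof (intro sum.neutral ballI)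
    fix j assume "j \<in> {..<R}"
    then have "lam j \<noteq> 0" "xt$j = yt$j / lam j" using xj lp by auto
    then show "(yt$j - lam j * xt$j)\<^sup>2 = 0" by simp
  qed
  then have p0: "Phi xt = (\<Sum>j\<in>{R..<M}. (yt$j)\<^sup>2)"
    unfolding Phi_def by simp
  have sq: "sqn xt = (\<Sum>j<R. (yt$j)\<^sup>2 / (lam j)\<^sup>2) + 2 * gfun M R lam yt se2 sn2 0 / (real M * se2)"
    unfolding sqn_sum[OF xt] sum_split[OF RN] rs using xj by (simp add: power_divide)
  have g0: "gfun M R lam yt se2 sn2 0 = 1/2 * (\<Sum>j\<in>{R..<M}. (yt$j)\<^sup>2)
      - real M / 2 * ((\<Sum>j<R. se2 * ((yt$j)\<^sup>2 / (lam j)\<^sup>2)) + sn2)"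
  proof -
    have "(\<Sum>j<R. se2 * (yt $ j)\<^sup>2 * (lam j)\<^sup>2 / ((lam j)\<^sup>2 + 2 * 0 * se2)\<^sup>2) = (\<Sum>j<R. se2 * ((yt$j)\<^sup>2 / (lam j)\<^sup>2))"
      using lp by (intro sum.cong) (auto simp: power2_eq_square field_simps)
    then show ?thesis unfolding gfun_def by simp
  qed
  have Mpos: "real M * se2 > 0" using M1 se2 by simp
  define G where "G = gfun M R lam yt se2 sn2 0"
  define Y where "Y = (\<Sum>j<R. (yt$j)\<^sup>2 / (lam j)\<^sup>2)"
  define Rs where "Rs = (\<Sum>j\<in>{R..<M}. (yt$j)\<^sup>2)"
  have g0': "G = 1/2 * Rs - real M / 2 * (se2 * Y + sn2)"
    unfolding G_def Y_def Rs_def g0 by (simp add: sum_distrib_left)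
  have "real M \<noteq> 0" "se2 \<noteq> 0" using M1 se2 by auto
  then have "real M * (se2 * (2 * G / (real M * se2))) = 2 * G" by simp
  then have "real M * (se2 * (Y + 2 * G / (real M * se2)) + sn2) = real M * se2 * Y + 2 * G + real M * sn2"
    by (simp add: algebra_simps)
  also have "\<dots> = Rs" unfolding g0' by (simp add: algebra_simps)
  finally show ?thesis unfolding p0 Bf_def sq G_def[symmetric] Y_def[symmetric] Rs_def[symmetric] by simp
qed

lemma g_cont: "continuous_on {0..real M/2} (gfun M R lam yt se2 sn2)"
proof -
  have pos: "(lam j)\<^sup>2 + 2 * \<nu> * se2 > 0" if "\<nu> \<ge> 0" "j < R" for \<nu> j
  proof -
    have "lam j > 0" using lam_pos that by blast
    then have "(lam j)\<^sup>2 > 0" by simp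
    moreover have "2 * \<nu> * se2 \<ge> 0" using that se2 by simp
    ultimately show ?thesis by linarith
  qed
  show ?thesis unfolding gfun_def
    by (intro continuous_intros) (use pos in \<open>fastforce+\<close>)
qed

lemma g_end: "gfun M R lam yt se2 sn2 (real M / 2) \<ge> 0"
proof -
  let ?n = "real M / 2"
  have pos: "(lam j)\<^sup>2 + 2 * ?n * se2 > 0" if "j < R" for j
  proof -
    have "lam j > 0" using lam_pos that by blast
    then have "(lam j)\<^sup>2 > 0" by simp
    moreover have "2 * ?n * se2 \<ge> 0" using that se2 by simp
    ultimately show ?thesis by linarith
  qed
  have eq: "gfun M R lam yt se2 sn2 ?n = (\<Sum>j<R. (yt $ j)\<^sup>2 * ?n * se2 / ((lam j)\<^sup>2 + 2 * ?n * se2)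
      - ?n * (se2 * (yt $ j)\<^sup>2 * (lam j)\<^sup>2 / ((lam j)\<^sup>2 + 2 * ?n * se2)\<^sup>2)) + 1/2 * (\<Sum>j\<in>{R..<M}. (yt$j)\<^sup>2)"
    unfolding gfun_def by (simp add: sum_subtractf sum_distrib_left algebra_simps)
  have "(yt $ j)\<^sup>2 * ?n * se2 / ((lam j)\<^sup>2 + 2 * ?n * se2)
      - ?n * (se2 * (yt $ j)\<^sup>2 * (lam j)\<^sup>2 / ((lam j)\<^sup>2 + 2 * ?n * se2)\<^sup>2) \<ge> 0" if j: "j < R" for j
  proof -
    have "(yt $ j)\<^sup>2 * ?n * se2 / ((lam j)\<^sup>2 + 2 * ?n * se2)
      - ?n * (se2 * (yt $ j)\<^sup>2 * (lam j)\<^sup>2 / ((lam j)\<^sup>2 + 2 * ?n * se2)\<^sup>2)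
      = (yt $ j)\<^sup>2 * ?n * se2 * (2 * ?n * se2) / ((lam j)\<^sup>2 + 2 * ?n * se2)\<^sup>2"
      using gend_pt[OF refl pos[OF j], of "(yt $ j)\<^sup>2 * ?n * se2"] by (simp add: algebra_simps)
    also have "\<dots> \<ge> 0" using se2 by simp
    finally show ?thesis .
  qed
  then have "(\<Sum>j<R. (yt $ j)\<^sup>2 * ?n * se2 / ((lam j)\<^sup>2 + 2 * ?n * se2)
      - ?n * (se2 * (yt $ j)\<^sup>2 * (lam j)\<^sup>2 / ((lam j)\<^sup>2 + 2 * ?n * se2)\<^sup>2)) \<ge> 0"
    by (intro sum_nonneg) auto
  moreover have "(\<Sum>j\<in>{R..<M}. (yt$j)\<^sup>2) \<ge> 0" by (intro sum_nonneg) auto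
  ultimately show ?thesis unfolding eq by simp
qed

lemma g_root:
  assumes g0: "gfun M R lam yt se2 sn2 0 < 0"
  shows "\<exists>\<nu>. 0 < \<nu> \<and> \<nu> \<le> real M / 2 \<and> gfun M R lam yt se2 sn2 \<nu> = 0"
proof -
  obtain \<nu> where "0 \<le> \<nu>" "\<nu> \<le> real M/2" "gfun M R lam yt se2 sn2 \<nu> = 0"
    using IVT'[of "gfun M R lam yt se2 sn2" 0 0 "real M/2"] g0 g_end g_cont by force
  moreover then have "\<nu> > 0" using g0 by (cases "\<nu> = 0") auto
  ultimately show ?thesis by blast
qed

lemma H_V: "w \<in> carrier_vec N \<Longrightarrow> H *\<^sub>v (V *\<^sub>v w) = U *\<^sub>v (S *\<^sub>v w)"
proof -
  assume w: "w \<in> carrier_vec N"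
  have "H *\<^sub>v (V *\<^sub>v w) = U *\<^sub>v (S *\<^sub>v (transpose_mat V *\<^sub>v (V *\<^sub>v w)))"
    unfolding svd using U S V w by (simp add: assoc_mult_mat_vec[of _ M M _ N] assoc_mult_mat_vec[of _ M N _ N])
  also have "\<dots> = U *\<^sub>v (S *\<^sub>v w)" using Vt_V[OF w] by simp
  finally show ?thesis .
qed

lemma HT_eq: "transpose_mat H = V * (transpose_mat S * transpose_mat U)"
proof -
  have "transpose_mat H = transpose_mat (transpose_mat V) * transpose_mat (U * S)"
    unfolding svd using U S V by (intro transpose_mult) auto
  also have "transpose_mat (U * S) = transpose_mat S * transpose_mat U" using U S by (intro transpose_mult) auto
  finally show ?thesis by simp
qed

lemma HT_mult: "v \<in> carrier_vec M \<Longrightarrow> transpose_mat H *\<^sub>v v = V *\<^sub>v (transpose_mat S *\<^sub>v (transpose_mat U *\<^sub>v v))"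
  unfolding HT_eq using U S V by (simp add: assoc_mult_mat_vec[of _ N N _ M] assoc_mult_mat_vec[of _ N M _ M])

lemma UtU: "v \<in> carrier_vec M \<Longrightarrow> transpose_mat U *\<^sub>v (U *\<^sub>v v) = v"
proof -
  assume v: "v \<in> carrier_vec M"
  have "transpose_mat U *\<^sub>v (U *\<^sub>v v) = (transpose_mat U * U) *\<^sub>v v" using U v by (intro assoc_mult_mat_vec[symmetric]) auto
  also have "\<dots> = v" using Uorth v by simp
  finally show ?thesis .
qed

lemma A_V:
  assumes RN': "R = N" and w: "w \<in> carrier_vec N"
  shows "(transpose_mat H * H + c \<cdot>\<^sub>m 1\<^sub>m N) *\<^sub>v (V *\<^sub>v w) = V *\<^sub>v vec N (\<lambda>i. ((lam i)\<^sup>2 + c) * w$i)"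
proof -
  have Vw: "V *\<^sub>v w \<in> carrier_vec N" using V w by simp
  have Sw: "S *\<^sub>v w \<in> carrier_vec M" using S w by simp
  have "(transpose_mat H * H + c \<cdot>\<^sub>m 1\<^sub>m N) *\<^sub>v (V *\<^sub>v w) = (transpose_mat H * H) *\<^sub>v (V *\<^sub>v w) + (c \<cdot>\<^sub>m 1\<^sub>m N) *\<^sub>v (V *\<^sub>v w)"
    using H Vw by (intro add_mult_distrib_mat_vec) auto
  also have "(transpose_mat H * H) *\<^sub>v (V *\<^sub>v w) = transpose_mat H *\<^sub>v (H *\<^sub>v (V *\<^sub>v w))"
    using H Vw by (intro assoc_mult_mat_vec) auto
  also have "\<dots> = V *\<^sub>v (transpose_mat S *\<^sub>v (S *\<^sub>v w))"
    unfolding H_V[OF w] using HT_mult[of "U *\<^sub>v (S *\<^sub>v w)"] UtU[OF Sw] U Sw by simp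
  also have "(c \<cdot>\<^sub>m 1\<^sub>m N) *\<^sub>v (V *\<^sub>v w) = V *\<^sub>v (c \<cdot>\<^sub>v w)"
    using smult_one_mult[OF Vw] mult_mat_vec[OF V w] by simp
  also have "V *\<^sub>v (transpose_mat S *\<^sub>v (S *\<^sub>v w)) + V *\<^sub>v (c \<cdot>\<^sub>v w) = V *\<^sub>v (transpose_mat S *\<^sub>v (S *\<^sub>v w) + c \<cdot>\<^sub>v w)"
    using V S w by (intro mult_add_distrib_mat_vec[symmetric]) auto
  also have "transpose_mat S *\<^sub>v (S *\<^sub>v w) + c \<cdot>\<^sub>v w = vec N (\<lambda>i. ((lam i)\<^sup>2 + c) * w$i)"
  proof (rule eq_vecI)
    fix i assume "i < dim_vec (vec N (\<lambda>i. ((lam i)\<^sup>2 + c) * w$i))"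
    then have i: "i < N" by simp
    have "(transpose_mat S *\<^sub>v (S *\<^sub>v w)) $ i = lam i * (S *\<^sub>v w) $ i"
      unfolding ST_mult[OF Sw] using i RN' by simp
    also have "(S *\<^sub>v w) $ i = lam i * w $ i" unfolding S_mult[OF w] using i RN' RM by simp
    finally have e: "(transpose_mat S *\<^sub>v (S *\<^sub>v w)) $ i = lam i * (lam i * w $ i)" .
    have "(transpose_mat S *\<^sub>v (S *\<^sub>v w) + c \<cdot>\<^sub>v w) $ i = (transpose_mat S *\<^sub>v (S *\<^sub>v w)) $ i + c * w $ i"
      using i w S by simp
    then show "(transpose_mat S *\<^sub>v (S *\<^sub>v w) + c \<cdot>\<^sub>v w) $ i = vec N (\<lambda>i. ((lam i)\<^sup>2 + c) * w$i) $ i"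
      unfolding e using i by (simp add: power2_eq_square distrib_right)
  next
    show "dim_vec (transpose_mat S *\<^sub>v (S *\<^sub>v w) + c \<cdot>\<^sub>v w) = dim_vec (vec N (\<lambda>i. ((lam i)\<^sup>2 + c) * w$i))"
      using S w by simp
  qed
  finally show ?thesis .
qed

lemma caseC_vec:
  assumes RN': "R = N" and d: "\<forall>j<R. (lam j)\<^sup>2 + c > 0"
  shows "the (mat_inverse (transpose_mat H * H + c \<cdot>\<^sub>m 1\<^sub>m N)) *\<^sub>v (transpose_mat H *\<^sub>v y)
     = V *\<^sub>v vec N (\<lambda>i. yt $ i * lam i / ((lam i)\<^sup>2 + c))"
proof -
  let ?A = "transpose_mat H * H + c \<cdot>\<^sub>m 1\<^sub>m N"
  let ?xt = "vec N (\<lambda>i. yt $ i * lam i / ((lam i)\<^sup>2 + c))"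
  have A: "?A \<in> carrier_mat N N" using H by simp
  have xt: "?xt \<in> carrier_vec N" by simp
  have Ax: "?A *\<^sub>v (V *\<^sub>v ?xt) = transpose_mat H *\<^sub>v y"
  proof -
    have "?A *\<^sub>v (V *\<^sub>v ?xt) = V *\<^sub>v vec N (\<lambda>i. ((lam i)\<^sup>2 + c) * ?xt$i)" by (rule A_V[OF RN' xt])
    also have "vec N (\<lambda>i. ((lam i)\<^sup>2 + c) * ?xt$i) = transpose_mat S *\<^sub>v yt"
      unfolding ST_mult[OF yt_carrier]
    proof (rule eq_vecI)
      fix i assume "i < dim_vec (vec N (\<lambda>i. if i < R then lam i * yt $ i else 0))"
      then have i: "i < N" by simp
      have "(lam i)\<^sup>2 + c \<noteq> 0" using d i RN' by (metis less_irrefl)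
      then show "vec N (\<lambda>i. ((lam i)\<^sup>2 + c) * ?xt$i) $ i = vec N (\<lambda>i. if i < R then lam i * yt $ i else 0) $ i"
        using i RN' by simp
    qed simp
    also have "V *\<^sub>v (transpose_mat S *\<^sub>v yt) = transpose_mat H *\<^sub>v y" using HT_mult[OF y] by simp
    finally show ?thesis .
  qed
  have "det ?A \<noteq> 0"
  proof
    assume "det ?A = 0"
    then obtain v where v: "v \<in> carrier_vec N" "v \<noteq> 0\<^sub>v N" "?A *\<^sub>v v = 0\<^sub>v N"
      using det_0_iff_vec_prod_zero_field[OF A] by blast
    let ?w = "transpose_mat V *\<^sub>v v"
    have w: "?w \<in> carrier_vec N" using V v by simp
    have "V *\<^sub>v vec N (\<lambda>i. ((lam i)\<^sup>2 + c) * ?w$i) = 0\<^sub>v N"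
      using A_V[OF RN' w] V_Vt[OF v(1)] v(3) by simp
    moreover have "transpose_mat V *\<^sub>v 0\<^sub>v N = 0\<^sub>v N"
      using V by (intro mult_zero_vec) simp
    ultimately have "transpose_mat V *\<^sub>v (V *\<^sub>v vec N (\<lambda>i. ((lam i)\<^sup>2 + c) * ?w$i)) = 0\<^sub>v N"
      by simp
    then have "vec N (\<lambda>i. ((lam i)\<^sup>2 + c) * ?w$i) = 0\<^sub>v N" using Vt_V[of "vec N (\<lambda>i. ((lam i)\<^sup>2 + c) * ?w$i)"] by simp
    then have z: "vec N (\<lambda>i. ((lam i)\<^sup>2 + c) * ?w$i) $ i = 0\<^sub>v N $ i" for i by simp
    have "?w = 0\<^sub>v N"
    proof (rule eq_vecI)
      fix i assume "i < dim_vec (0\<^sub>v N :: real vec)"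
      then have i: "i < N" by simp
      have ne: "(lam i)\<^sup>2 + c \<noteq> 0" using d i RN' by (metis less_irrefl)
      have "((lam i)\<^sup>2 + c) * ?w$i = 0" using z[of i] i by simp
      then show "?w $ i = 0\<^sub>v N $ i" using ne i by simp
    qed (use V in simp)
    then have "v = V *\<^sub>v 0\<^sub>v N" using V_Vt[OF v(1)] by simp
    also have "\<dots> = 0\<^sub>v N" using V by (rule mult_zero_vec)
    finally show False using v(2) by simp
  qed
  then have "?A \<in> Units (ring_mat TYPE(real) N ())" by (rule det_non_zero_imp_unit[OF A])
  then have "mat_inverse ?A \<noteq> None" using mat_inverse(1)[OF A, of "()"] by metis
  then obtain B where B: "mat_inverse ?A = Some B" by auto
  from mat_inverse(2)[OF A B] have BA: "B * ?A = 1\<^sub>m N" and Bc: "B \<in> carrier_mat N N" by auto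
  have "B *\<^sub>v (transpose_mat H *\<^sub>v y) = B *\<^sub>v (?A *\<^sub>v (V *\<^sub>v ?xt))" unfolding Ax ..
  also have "\<dots> = (B * ?A) *\<^sub>v (V *\<^sub>v ?xt)" using Bc A V by (intro assoc_mult_mat_vec[symmetric]) auto
  also have "\<dots> = V *\<^sub>v ?xt" unfolding BA using V by simp
  finally show ?thesis using B by simp
qed

end

theorem mainTheorem4:
  fixes M N R :: nat and y :: "real vec" and H U V S :: "real mat"
    and lam :: "nat \<Rightarrow> real" and se2 sn2 :: real
  assumes M1: "M \<ge> 1" and N1: "N \<ge> 1"
    and y: "y \<in> carrier_vec M"
    and H: "H \<in> carrier_mat M N"
    and rank: "R = vec_space.rank M H" and R1: "R \<ge> 1"
    and se2: "se2 > 0" and sn2: "sn2 > 0"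
    and U: "U \<in> carrier_mat M M" and Uorth: "transpose_mat U * U = 1\<^sub>m M"
    and V: "V \<in> carrier_mat N N" and Vorth: "transpose_mat V * V = 1\<^sub>m N"
    and S: "S \<in> carrier_mat M N"
    and Sdiag: "\<forall>i<M. \<forall>j<N. S $$ (i,j) = (if i = j \<and> i < R then lam i else 0)"
    and lam_mono: "\<forall>i j. i \<le> j \<and> j < R \<longrightarrow> lam j \<le> lam i"
    and lam_pos: "\<forall>j<R. lam j > 0"
    and svd: "H = U * S * transpose_mat V"
  shows
    "(R \<le> N - 1 \<and> gfun M R lam (transpose_mat U *\<^sub>v y) se2 sn2 0 \<ge> 0 \<longrightarrow>
       (\<forall>xt \<in> carrier_vec N.
          (\<forall>j<R. xt $ j = (transpose_mat U *\<^sub>v y) $ j / lam j)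
          \<and> (\<Sum>i\<in>{R..<N}. (xt $ i)\<^sup>2)
              = 2 * gfun M R lam (transpose_mat U *\<^sub>v y) se2 sn2 0 / (real M * se2)
          \<longrightarrow> is_global_min N (fobj y H se2 sn2) (V *\<^sub>v xt)))
     \<and>
     (R \<le> N - 1 \<and> gfun M R lam (transpose_mat U *\<^sub>v y) se2 sn2 0 < 0 \<longrightarrow>
       (\<exists>\<nu>. 0 < \<nu> \<and> \<nu> \<le> real M / 2 \<and> gfun M R lam (transpose_mat U *\<^sub>v y) se2 sn2 \<nu> = 0)
       \<and> (\<forall>\<nu>. 0 < \<nu> \<and> \<nu> \<le> real M / 2 \<and> gfun M R lam (transpose_mat U *\<^sub>v y) se2 sn2 \<nu> = 0 \<longrightarrow>
            is_global_min N (fobj y H se2 sn2)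
              (V *\<^sub>v vec N (\<lambda>i. if i < R
                  then (transpose_mat U *\<^sub>v y) $ i * lam i / ((lam i)\<^sup>2 + 2 * \<nu> * se2)
                  else 0))))
     \<and>
     (R = N \<longrightarrow>
       (\<forall>\<nu>. - (lam (R - 1))\<^sup>2 / (2 * se2) < \<nu> \<and> \<nu> \<le> real M / 2
            \<and> gfun M R lam (transpose_mat U *\<^sub>v y) se2 sn2 \<nu> = 0 \<longrightarrow>
            is_global_min N (fobj y H se2 sn2)
              (the (mat_inverse (transpose_mat H * H + (2 * \<nu> * se2) \<cdot>\<^sub>m 1\<^sub>m N))
                 *\<^sub>v (transpose_mat H *\<^sub>v y))))"
proof -
  have RM: "R \<le> M" unfolding rank by (rule rank_le_nr[OF H])
  have RN: "R \<le> N" unfolding rank by (rule vec_space.rank_le_nc[OF H])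
  interpret ctx: svdctx M N R y H U V S lam se2 sn2
    by unfold_locales (use y H RM RN se2 sn2 U Uorth V Vorth S Sdiag svd lam_pos in auto)
  let ?yt = "transpose_mat U *\<^sub>v y"
  let ?g = "gfun M R lam ?yt se2 sn2"
  have partA: "R \<le> N - 1 \<and> ?g 0 \<ge> 0 \<longrightarrow>
       (\<forall>xt \<in> carrier_vec N.
          (\<forall>j<R. xt $ j = ?yt $ j / lam j)
          \<and> (\<Sum>i\<in>{R..<N}. (xt $ i)\<^sup>2) = 2 * ?g 0 / (real M * se2)
          \<longrightarrow> is_global_min N (fobj y H se2 sn2) (V *\<^sub>v xt))"
  proof (intro impI ballI)
    fix xt :: "real vec"
    assume xt: "xt \<in> carrier_vec N"
      and h: "(\<forall>j<R. xt $ j = ?yt $ j / lam j) \<and> (\<Sum>i\<in>{R..<N}. (xt $ i)\<^sup>2) = 2 * ?g 0 / (real M * se2)"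
    have rel: "ctx.Phi xt = (real M - 2*0) * ctx.Bf xt"
      by (rule ctx.caseA_rel[OF xt M1 lam_pos]) (use h in auto)
    show "is_global_min N (fobj y H se2 sn2) (V *\<^sub>v xt)"
    proof (rule ctx.opt_general[OF xt _ _ _ rel])
      show "\<forall>j<R. 0 < (lam j)\<^sup>2 + 2 * 0 * se2"
      proof (intro allI impI)
        fix j assume "j < R"
        then have "lam j > 0" using lam_pos by blast
        then show "0 < (lam j)\<^sup>2 + 2 * 0 * se2" by simp
      qed
      show "\<forall>j<R. xt $ j = ?yt $ j * lam j / ((lam j)\<^sup>2 + 2 * 0 * se2)"
      proof (intro allI impI)
        fix j assume j: "j < R"
        then have "lam j \<noteq> 0" using lam_pos by (metis less_irrefl)
        then show "xt $ j = ?yt $ j * lam j / ((lam j)\<^sup>2 + 2 * 0 * se2)"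
          using h j by (simp add: power2_eq_square)
      qed
      show "\<forall>j\<in>{R..<N}. \<forall>a. 0 * (xt $ j)\<^sup>2 \<le> 0 * a\<^sup>2" by simp
    qed
  qed
  have optB: "is_global_min N (fobj y H se2 sn2)
              (V *\<^sub>v vec N (\<lambda>i. if i < R then ?yt $ i * lam i / ((lam i)\<^sup>2 + 2 * \<nu> * se2) else 0))"
    if d: "\<forall>j<R. (lam j)\<^sup>2 + 2 * \<nu> * se2 > 0" and nu: "R < N \<longrightarrow> \<nu> \<ge> 0" and g: "?g \<nu> = 0" for \<nu>
  proof -
    let ?xt = "vec N (\<lambda>i. if i < R then ?yt $ i * lam i / ((lam i)\<^sup>2 + 2 * \<nu> * se2) else 0)"
    have xt: "?xt \<in> carrier_vec N" by simp
    have xj: "\<forall>j<R. ?xt $ j = ?yt $ j * lam j / ((lam j)\<^sup>2 + 2 * \<nu> * se2)" using RN by simp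
    have zero: "\<forall>j\<in>{R..<N}. ?xt $ j = 0" by simp
    have "ctx.Phi ?xt - (real M - 2*\<nu>) * ctx.Bf ?xt = 2 * ?g \<nu>"
      by (rule ctx.g_ident[OF xt d xj zero])
    then have rel: "ctx.Phi ?xt = (real M - 2*\<nu>) * ctx.Bf ?xt" using g by simp
    show ?thesis
    proof (rule ctx.opt_general[OF xt d xj _ rel])
      show "\<forall>j\<in>{R..<N}. \<forall>a. \<nu> * (?xt $ j)\<^sup>2 \<le> \<nu> * a\<^sup>2"
      proof (intro ballI allI)
        fix j a assume j: "j \<in> {R..<N}"
        then have "\<nu> \<ge> 0" using nu by auto
        then show "\<nu> * (?xt $ j)\<^sup>2 \<le> \<nu> * a\<^sup>2" using j by simp
      qed
    qed
  qed
  have partB: "R \<le> N - 1 \<and> ?g 0 < 0 \<longrightarrow>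
       (\<exists>\<nu>. 0 < \<nu> \<and> \<nu> \<le> real M / 2 \<and> ?g \<nu> = 0)
       \<and> (\<forall>\<nu>. 0 < \<nu> \<and> \<nu> \<le> real M / 2 \<and> ?g \<nu> = 0 \<longrightarrow>
            is_global_min N (fobj y H se2 sn2)
              (V *\<^sub>v vec N (\<lambda>i. if i < R
                  then ?yt $ i * lam i / ((lam i)\<^sup>2 + 2 * \<nu> * se2)
                  else 0)))"
  proof (intro impI conjI allI)
    assume "R \<le> N - 1 \<and> ?g 0 < 0"
    then show "\<exists>\<nu>. 0 < \<nu> \<and> \<nu> \<le> real M / 2 \<and> ?g \<nu> = 0" using ctx.g_root by blast
  next
    fix \<nu> assume h: "0 < \<nu> \<and> \<nu> \<le> real M / 2 \<and> ?g \<nu> = 0"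
    have d: "\<forall>j<R. (lam j)\<^sup>2 + 2 * \<nu> * se2 > 0"
    proof (intro allI impI)
      fix j assume "j < R"
      then have "lam j > 0" using lam_pos by blast
      then have "(lam j)\<^sup>2 > 0" by simp
      moreover have "2 * \<nu> * se2 > 0" using h se2 by simp
      ultimately show "(lam j)\<^sup>2 + 2 * \<nu> * se2 > 0" by linarith
    qed
    show "is_global_min N (fobj y H se2 sn2)
              (V *\<^sub>v vec N (\<lambda>i. if i < R then ?yt $ i * lam i / ((lam i)\<^sup>2 + 2 * \<nu> * se2) else 0))"
      by (rule optB[OF d]) (use h in auto)
  qed
  have partC: "R = N \<longrightarrow>
       (\<forall>\<nu>. - (lam (R - 1))\<^sup>2 / (2 * se2) < \<nu> \<and> \<nu> \<le> real M / 2
            \<and> ?g \<nu> = 0 \<longrightarrow>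
            is_global_min N (fobj y H se2 sn2)
              (the (mat_inverse (transpose_mat H * H + (2 * \<nu> * se2) \<cdot>\<^sub>m 1\<^sub>m N))
                 *\<^sub>v (transpose_mat H *\<^sub>v y)))"
  proof (intro impI allI)
    fix \<nu> assume RN': "R = N" and h: "- (lam (R - 1))\<^sup>2 / (2 * se2) < \<nu> \<and> \<nu> \<le> real M / 2 \<and> ?g \<nu> = 0"
    have d: "\<forall>j<R. (lam j)\<^sup>2 + 2 * \<nu> * se2 > 0"
    proof (intro allI impI)
      fix j assume j: "j < R"
      have l1: "lam (R - 1) > 0" using lam_pos R1 by auto
      have "lam (R - 1) \<le> lam j" using lam_mono j by auto
      then have "(lam (R - 1))\<^sup>2 \<le> (lam j)\<^sup>2" using l1 by (intro power_mono) auto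
      moreover have "- (lam (R - 1))\<^sup>2 < 2 * \<nu> * se2"
      proof -
        have p: "0 < 2*se2" using se2 by simp
        have "- (lam (R - 1))\<^sup>2 / (2 * se2) < \<nu>" using h by blast
        then have "- (lam (R - 1))\<^sup>2 < \<nu> * (2 * se2)" by (simp only: pos_divide_less_eq[OF p])
        then show ?thesis by (simp add: mult.commute mult.left_commute)
      qed
      ultimately show "(lam j)\<^sup>2 + 2 * \<nu> * se2 > 0" by linarith
    qed
    have eq: "the (mat_inverse (transpose_mat H * H + (2 * \<nu> * se2) \<cdot>\<^sub>m 1\<^sub>m N)) *\<^sub>v (transpose_mat H *\<^sub>v y)
       = V *\<^sub>v vec N (\<lambda>i. ?yt $ i * lam i / ((lam i)\<^sup>2 + 2 * \<nu> * se2))"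
      by (rule ctx.caseC_vec[OF RN' d])
    have "vec N (\<lambda>i. ?yt $ i * lam i / ((lam i)\<^sup>2 + 2 * \<nu> * se2))
        = vec N (\<lambda>i. if i < R then ?yt $ i * lam i / ((lam i)\<^sup>2 + 2 * \<nu> * se2) else 0)"
      using RN' by (intro eq_vecI) auto
    then show "is_global_min N (fobj y H se2 sn2)
              (the (mat_inverse (transpose_mat H * H + (2 * \<nu> * se2) \<cdot>\<^sub>m 1\<^sub>m N)) *\<^sub>v (transpose_mat H *\<^sub>v y))"
      unfolding eq using optB[OF d] RN' h by simp
  qed
  show ?thesis using partA partB partC by blast
qed

end
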